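(* Consider the multiobjective composite problem $\min_{x\in\mathbb{R}^n} F(x)$ with $F=(F_1,\dots,F_m)$, $F_i=f_i+g_i$, where each $g_i$ is proper, convex and lower semicontinuous and each $f_i:\mathbb{R}^n\to\mathbb{R}$ is twice continuously differentiable (continuous Hessian) and $\mu$-strongly convex for some $\mu>0$. Let $\{x^k\}$ be the (infinite) sequence generated by the Newton-type proximal gradient method described in the context (with parameter $\sigma$), and let $x^*$ be its limit. Then for any $0<\epsilon\le(1-\sigma)\mu$ there exists $K_\epsilon>0$ such that for all $k\ge K_\epsilon$, \[ \|x^{k+1}-x^*\|\le\sqrt{\frac{\epsilon(1+\tau_k^2)}{\mu}}\,\|x^k-x^*\|, \] where $\tau_k:=\frac{\|x^{k+1}-x^k\|}{\|x^k-x^*\|}\in\Big[\frac{\mu-\sqrt{2\mu\epsilon-\epsilon^2}}{\mu-\epsilon},\frac{\mu+\sqrt{2\mu\epsilon-\epsilon^2}}{\mu-\epsilon}\Big]$. Furthermore, $\{x^k\}$ converges superlinearly to $x^*$.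
   Context: Notation: $[m]=\{1,\dots,m\}$. A twice continuously differentiable $h$ is $\mu$-strongly convex if $\mu I\preceq\nabla^2 h(x)$ for all $x$. Newton-type proximal gradient method: for $x\in\mathbb{R}^n$ let $d(x)=\arg\min_{d\in\mathbb{R}^n}\max_{i\in[m]}\{\langle\nabla f_i(x),d\rangle+g_i(x+d)-g_i(x)+\tfrac12\langle d,\nabla^2 f_i(x)d\rangle\}$ and let $\theta(x)$ be the optimal value. Given $x^0$ and $\sigma,\gamma\in(0,1)$, at iteration $k$ compute $d^k=d(x^k)$, $\theta^k=\theta(x^k)$, choose $t_k\in(0,1]$ as the largest element of $\{\gamma^j: j\in\mathbb{N},\ F_i(x^k+\gamma^j d^k)-F_i(x^k)\le \gamma^j\sigma\theta^k\ \forall i\in[m]\}$, and set $x^{k+1}=x^k+t_kd^k$. Standing assumption: the method generates an infinite sequence of points that are not Pareto critical ($d^k\ne0$ for all $k$); under the hypotheses this sequence converges to a Pareto solution $x^*$. *)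

theory Defs
  imports "HOL-Analysis.Analysis"
begin

definition proper_fun :: "('a \<Rightarrow> ereal) \<Rightarrow> bool" where
  "proper_fun g \<longleftrightarrow> (\<forall>x. g x \<noteq> -\<infinity>) \<and> (\<exists>x. g x \<noteq> \<infinity>)"

definition ereal_convex :: "('a::real_vector \<Rightarrow> ereal) \<Rightarrow> bool" where
  "ereal_convex g \<longleftrightarrow>
     (\<forall>x y t. 0 \<le> t \<and> t \<le> 1 \<longrightarrow>
        g ((1 - t) *\<^sub>R x + t *\<^sub>R y) \<le> ereal (1 - t) * g x + ereal t * g y)"

definition lsc_fun :: "('a::topological_space \<Rightarrow> ereal) \<Rightarrow> bool" where
  "lsc_fun g \<longleftrightarrow> (\<forall>x c. c < g x \<longrightarrow> (\<forall>\<^sub>F y in at x. c < g y))"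

definition newton_subobj ::
  "nat \<Rightarrow> (nat \<Rightarrow> real^'n \<Rightarrow> real^'n) \<Rightarrow> (nat \<Rightarrow> real^'n \<Rightarrow> real^'n^'n)
    \<Rightarrow> (nat \<Rightarrow> real^'n \<Rightarrow> ereal) \<Rightarrow> real^'n \<Rightarrow> real^'n \<Rightarrow> ereal" where
  "newton_subobj m Df H g x d =
     Max ((\<lambda>i. ereal (Df i x \<bullet> d) + g i (x + d) - g i x + ereal ((1/2) * (d \<bullet> (H i x *v d)))) ` {1..m})"

definition Fcomp :: "(nat \<Rightarrow> real^'n \<Rightarrow> real) \<Rightarrow> (nat \<Rightarrow> real^'n \<Rightarrow> ereal) \<Rightarrow> nat \<Rightarrow> real^'n \<Rightarrow> ereal" where
  "Fcomp f g i x = ereal (f i x) + g i x"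

definition armijo_steps ::
  "nat \<Rightarrow> (nat \<Rightarrow> real^'n \<Rightarrow> real) \<Rightarrow> (nat \<Rightarrow> real^'n \<Rightarrow> ereal) \<Rightarrow> real \<Rightarrow> real
    \<Rightarrow> real^'n \<Rightarrow> real^'n \<Rightarrow> ereal \<Rightarrow> real set" where
  "armijo_steps m f g \<sigma> \<gamma> x d \<theta> =
     {\<gamma> ^ j | j. \<forall>i\<in>{1..m}. Fcomp f g i (x + (\<gamma> ^ j) *\<^sub>R d) - Fcomp f g i x \<le> ereal (\<gamma> ^ j * \<sigma>) * \<theta>}"

end

theory Submission
  imports Defs
begin


lemma matvec_bound:
  fixes A :: "real^'n^'n" and w :: "real^'n"
  shows "norm (A *v w) \<le> real CARD('n) * norm A * norm w"
proof -
  have "norm (A *v w) \<le> (\<Sum>i\<in>UNIV. \<bar>(A *v w) $ i\<bar>)"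
    by (rule norm_le_l1_cart)
  also have "\<dots> \<le> (\<Sum>i::'n\<in>UNIV. norm A * norm w)"
  proof (rule sum_mono)
    fix i
    have "\<bar>(A *v w) $ i\<bar> \<le> norm(A $ i) * norm w"
      by (simp add: matrix_mult_dot Cauchy_Schwarz_ineq2)
    also have "\<dots> \<le> norm A * norm w"
      by (simp add: mult_right_mono Finite_Cartesian_Product.norm_nth_le)
    finally show "\<bar>(A *v w) $ i\<bar> \<le> norm A * norm w" .
  qed
  also have "\<dots> = real CARD('n) * norm A * norm w" by simp
  finally show ?thesis .
qed

lemma quad_bound:
  fixes A :: "real^'n^'n" and w :: "real^'n"
  shows "\<bar>w \<bullet> (A *v w)\<bar> \<le> real CARD('n) * norm A * (w \<bullet> w)"
proof -
  have "\<bar>w \<bullet> (A *v w)\<bar> \<le> norm w * norm (A *v w)" by (rule Cauchy_Schwarz_ineq2)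
  also have "\<dots> \<le> norm w * (real CARD('n) * norm A * norm w)"
    by (simp add: matvec_bound mult_left_mono)
  also have "\<dots> = real CARD('n) * norm A * (w \<bullet> w)"
    by (simp add: power2_norm_eq_inner[symmetric] power2_eq_square)
  finally show ?thesis .
qed

lemma taylor2:
  fixes F :: "real^'n \<Rightarrow> real" and G :: "real^'n \<Rightarrow> real^'n" and A :: "real^'n \<Rightarrow> real^'n^'n"
  assumes dF: "\<forall>y. (F has_derivative (\<lambda>v. G y \<bullet> v)) (at y)"
    and dG: "\<forall>y. (G has_derivative (\<lambda>v. A y *v v)) (at y)"
  shows "\<exists>\<xi>. 0 < \<xi> \<and> \<xi> < 1 \<and> F (y + w) = F y + G y \<bullet> w + (1/2) * (w \<bullet> (A (y + \<xi> *\<^sub>R w) *v w))"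
proof -
  define D :: "nat \<Rightarrow> real \<Rightarrow> real" where "D = (\<lambda>n s. if n = 0 then F (y + s *\<^sub>R w)
     else if n = 1 then G (y + s *\<^sub>R w) \<bullet> w else w \<bullet> (A (y + s *\<^sub>R w) *v w))"
  have D0: "D 0 = (\<lambda>s. F (y + s *\<^sub>R w))" and D1: "D 1 = (\<lambda>s. G (y + s *\<^sub>R w) \<bullet> w)"
    and D2: "D 2 = (\<lambda>s. w \<bullet> (A (y + s *\<^sub>R w) *v w))" by (auto simp: D_def fun_eq_iff)
  have lin: "((\<lambda>s. y + s *\<^sub>R w) has_derivative (\<lambda>h. h *\<^sub>R w)) (at s)" for s
    by (auto intro!: derivative_eq_intros)
  have d0: "DERIV (D 0) s :> D 1 s" for s
  proof -
    have "((\<lambda>s. F (y + s *\<^sub>R w)) has_derivative (\<lambda>h. G (y + s *\<^sub>R w) \<bullet> (h *\<^sub>R w))) (at s)"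
      using has_derivative_compose[OF lin dF[rule_format]] by simp
    then show ?thesis unfolding D0 D1 D2 has_field_derivative_def
      by (rule has_derivative_eq_rhs) (auto simp: fun_eq_iff)
  qed
  have d1: "DERIV (D 1) s :> D 2 s" for s
  proof -
    have "((\<lambda>s. G (y + s *\<^sub>R w)) has_derivative (\<lambda>h. A (y + s *\<^sub>R w) *v (h *\<^sub>R w))) (at s)"
      using has_derivative_compose[OF lin dG[rule_format]] by simp
    then have "((\<lambda>s. G (y + s *\<^sub>R w) \<bullet> w) has_derivative (\<lambda>h. (A (y + s *\<^sub>R w) *v (h *\<^sub>R w)) \<bullet> w)) (at s)"
      by (auto intro!: derivative_eq_intros)
    then show ?thesis unfolding D0 D1 D2 has_field_derivative_def
      by (rule has_derivative_eq_rhs) (auto simp: fun_eq_iff matrix_vector_mult_scaleR inner_commute)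
  qed
  have "\<exists>t. 0 < t \<and> t < 1 \<and> D 0 1 = (\<Sum>m<2. D m 0 / fact m * 1 ^ m) + D 2 t / fact 2 * 1 ^ 2"
    apply (rule Maclaurin[where f = "D 0"])
    using d0 d1 by (auto simp: numeral_2_eq_2 less_Suc_eq)
  then obtain t where "0 < t" "t < 1" "D 0 1 = (\<Sum>m<2. D m 0 / fact m * 1 ^ m) + D 2 t / fact 2 * 1 ^ 2" by blast
  then show ?thesis
    by (intro exI[of _ t]) (simp add: D_def numeral_2_eq_2)
qed


lemma aux3: "(c::real) - F - e < G \<Longrightarrow> Fy - F < e \<and> F - Fy < e \<Longrightarrow> a < c \<Longrightarrow> e = (c-a)/3 \<Longrightarrow> a < Fy + G"
  by (elim conjE) (simp add: field_simps)

locale pnm =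
  fixes m :: nat
    and f :: "nat \<Rightarrow> real^'n \<Rightarrow> real"
    and Df :: "nat \<Rightarrow> real^'n \<Rightarrow> real^'n"
    and H :: "nat \<Rightarrow> real^'n \<Rightarrow> real^'n^'n"
    and g :: "nat \<Rightarrow> real^'n \<Rightarrow> ereal"
    and \<mu> \<sigma> \<gamma> :: real
    and x d :: "nat \<Rightarrow> real^'n"
    and \<theta> :: "nat \<Rightarrow> ereal"
    and t :: "nat \<Rightarrow> real"
    and xstar :: "real^'n"
  assumes m: "m \<ge> 1"
    and g_proper: "\<forall>i\<in>{1..m}. proper_fun (g i)"
    and g_convex: "\<forall>i\<in>{1..m}. ereal_convex (g i)"
    and g_lsc: "\<forall>i\<in>{1..m}. lsc_fun (g i)"
    and f_grad: "\<forall>i\<in>{1..m}. \<forall>y. (f i has_derivative (\<lambda>v. Df i y \<bullet> v)) (at y)"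
    and f_hess: "\<forall>i\<in>{1..m}. \<forall>y. (Df i has_derivative (\<lambda>v. H i y *v v)) (at y)"
    and hess_cont: "\<forall>i\<in>{1..m}. continuous_on UNIV (H i)"
    and mu_pos: "\<mu> > 0"
    and strongly_convex: "\<forall>i\<in>{1..m}. \<forall>y v. \<mu> * (v \<bullet> v) \<le> v \<bullet> (H i y *v v)"
    and sigma: "0 < \<sigma>" "\<sigma> < 1"
    and gamma: "0 < \<gamma>" "\<gamma> < 1"
    and x0_dom: "\<forall>i\<in>{1..m}. g i (x 0) \<noteq> \<infinity>"
    and dir: "\<forall>k. \<forall>v. newton_subobj m Df H g (x k) (d k) \<le> newton_subobj m Df H g (x k) v"
    and val: "\<forall>k. \<theta> k = newton_subobj m Df H g (x k) (d k)"
    and step: "\<forall>k. t k \<in> armijo_steps m f g \<sigma> \<gamma> (x k) (d k) (\<theta> k)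
                    \<and> (\<forall>s\<in>armijo_steps m f g \<sigma> \<gamma> (x k) (d k) (\<theta> k). s \<le> t k)"
    and update: "\<forall>k. x (Suc k) = x k + t k *\<^sub>R d k"
    and not_crit: "\<forall>k. d k \<noteq> 0"
    and lim: "x \<longlonglongrightarrow> xstar"
begin

definition gr where "gr i z = real_of_ereal (g i z)"
definition tm where "tm y i u = Df i y \<bullet> u + gr i (y + u) - gr i y + 1/2 * (u \<bullet> (H i y *v u))"
definition phi where "phi y u = Max ((\<lambda>i. tm y i u) ` {1..m})"
definition Fr where "Fr i z = f i z + gr i z"

lemma Ine: "{1..m} \<noteq> {}" and Ifin: "finite {1..m}" using m by auto

lemma g_nm: "i \<in> {1..m} \<Longrightarrow> g i y \<noteq> -\<infinity>"
  using g_proper by (auto simp: proper_fun_def)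

lemma g_eq: "i \<in> {1..m} \<Longrightarrow> g i y \<noteq> \<infinity> \<Longrightarrow> g i y = ereal (gr i y)"
  using g_nm[of i y] unfolding gr_def by (cases "g i y") auto

lemma subobj_fin:
  assumes "\<forall>i\<in>{1..m}. g i y \<noteq> \<infinity>" "\<forall>i\<in>{1..m}. g i (y + u) \<noteq> \<infinity>"
  shows "newton_subobj m Df H g y u = ereal (phi y u)"
proof -
  have "newton_subobj m Df H g y u = Max ((\<lambda>i. ereal (tm y i u)) ` {1..m})"
    unfolding newton_subobj_def
    apply (rule arg_cong[where f=Max])
    apply (rule image_cong[OF refl])
  proof -
    fix i assume i: "i \<in> {1..m}"
    then have "g i y = ereal (gr i y)" "g i (y + u) = ereal (gr i (y + u))" using assms g_eq by auto
    then show "ereal (Df i y \<bullet> u) + g i (y + u) - g i y + ereal ((1/2) * (u \<bullet> (H i y *v u))) = ereal (tm y i u)"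
      by (simp add: tm_def)
  qed
  also have "\<dots> = ereal (phi y u)"
    unfolding phi_def
    by (subst mono_Max_commute[where f=ereal]) (use m in \<open>auto simp: mono_def Ine Ifin image_image\<close>)
  finally show ?thesis .
qed

lemma subobj_inf:
  assumes "\<forall>i\<in>{1..m}. g i y \<noteq> \<infinity>" "j \<in> {1..m}" "g j (y + u) = \<infinity>"
  shows "newton_subobj m Df H g y u = \<infinity>"
proof -
  have "ereal (Df j y \<bullet> u) + g j (y + u) - g j y + ereal ((1/2) * (u \<bullet> (H j y *v u))) = \<infinity>"
    using assms g_eq[of j y] by simp
  moreover have "ereal (Df j y \<bullet> u) + g j (y + u) - g j y + ereal ((1/2) * (u \<bullet> (H j y *v u)))
      \<le> newton_subobj m Df H g y u"
    unfolding newton_subobj_def using assms(2) by (intro Max_ge) auto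
  ultimately show ?thesis by simp
qed

lemma phi_zero: "phi y 0 = 0"
proof -
  have "(\<lambda>i. tm y i 0) ` {1..m} = {0}" using Ine by (auto simp: tm_def)
  then show ?thesis by (simp add: phi_def)
qed

lemma dk_facts:
  assumes fin: "\<forall>i\<in>{1..m}. g i (x k) \<noteq> \<infinity>"
  shows "\<forall>i\<in>{1..m}. g i (x k + d k) \<noteq> \<infinity>" and "\<theta> k = ereal (phi (x k) (d k))"
    and "phi (x k) (d k) \<le> 0"
    and "\<And>u. \<forall>i\<in>{1..m}. g i (x k + u) \<noteq> \<infinity> \<Longrightarrow> phi (x k) (d k) \<le> phi (x k) u"
proof -
  have z: "newton_subobj m Df H g (x k) 0 = 0"
    using subobj_fin[OF fin, of 0] fin by (simp add: phi_zero zero_ereal_def)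
  show f1: "\<forall>i\<in>{1..m}. g i (x k + d k) \<noteq> \<infinity>"
  proof (rule ccontr)
    assume "\<not> ?thesis"
    then obtain j where "j \<in> {1..m}" "g j (x k + d k) = \<infinity>" by blast
    then have "newton_subobj m Df H g (x k) (d k) = \<infinity>" using subobj_inf[OF fin] by blast
    with dir z have "\<infinity> \<le> (0::ereal)" by metis
    then show False by simp
  qed
  show "\<theta> k = ereal (phi (x k) (d k))" using val subobj_fin[OF fin f1] by simp
  show "phi (x k) (d k) \<le> 0"
  proof -
    have "ereal (phi (x k) (d k)) \<le> 0" using dir z subobj_fin[OF fin f1] by metis
    then show ?thesis by simp
  qed
  show "phi (x k) (d k) \<le> phi (x k) u" if "\<forall>i\<in>{1..m}. g i (x k + u) \<noteq> \<infinity>" for u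
    using dir subobj_fin[OF fin f1] subobj_fin[OF fin that] by (metis ereal_less_eq(3))
qed

lemma Fcomp_eq: "i \<in> {1..m} \<Longrightarrow> g i z \<noteq> \<infinity> \<Longrightarrow> Fcomp f g i z = ereal (Fr i z)"
  using g_eq[of i z] by (simp add: Fcomp_def Fr_def)

lemma t_form: "\<exists>j. t k = \<gamma> ^ j \<and> (\<forall>i\<in>{1..m}. Fcomp f g i (x k + (\<gamma> ^ j) *\<^sub>R d k) - Fcomp f g i (x k) \<le> ereal (\<gamma> ^ j * \<sigma>) * \<theta> k)"
  using step[rule_format, of k] unfolding armijo_steps_def by blast

lemma t_pos: "0 < t k" and t_le1: "t k \<le> 1"
  using t_form[of k] gamma by (auto simp: power_le_one)

lemma armijo_real:
  assumes fin: "\<forall>i\<in>{1..m}. g i (x k) \<noteq> \<infinity>" and i: "i \<in> {1..m}"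
    and A: "Fcomp f g i (x k + s *\<^sub>R d k) - Fcomp f g i (x k) \<le> ereal (s * \<sigma>) * \<theta> k"
  shows "g i (x k + s *\<^sub>R d k) \<noteq> \<infinity> \<and> Fr i (x k + s *\<^sub>R d k) - Fr i (x k) \<le> s * \<sigma> * phi (x k) (d k)"
proof -
  have th: "\<theta> k = ereal (phi (x k) (d k))" using dk_facts(2)[OF fin] .
  have e0: "Fcomp f g i (x k) = ereal (Fr i (x k))" using Fcomp_eq i fin by auto
  show ?thesis
  proof (cases "g i (x k + s *\<^sub>R d k) = \<infinity>")
    case True
    then have "Fcomp f g i (x k + s *\<^sub>R d k) = \<infinity>" by (simp add: Fcomp_def)
    with A e0 th show ?thesis by simp
  next
    case False
    with A e0 th Fcomp_eq[OF i False] show ?thesis by simp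
  qed
qed

lemma armijo_back:
  assumes fin: "\<forall>i\<in>{1..m}. g i (x k) \<noteq> \<infinity>"
    and A: "\<forall>i\<in>{1..m}. g i (x k + (\<gamma>^j) *\<^sub>R d k) \<noteq> \<infinity> \<and> Fr i (x k + (\<gamma>^j) *\<^sub>R d k) - Fr i (x k) \<le> \<gamma>^j * \<sigma> * phi (x k) (d k)"
  shows "\<gamma> ^ j \<le> t k"
proof -
  have th: "\<theta> k = ereal (phi (x k) (d k))" using dk_facts(2)[OF fin] .
  have "\<gamma> ^ j \<in> armijo_steps m f g \<sigma> \<gamma> (x k) (d k) (\<theta> k)"
    unfolding armijo_steps_def
  proof (intro CollectI exI conjI ballI)
    fix i assume i: "i \<in> {1..m}"
    then show "Fcomp f g i (x k + (\<gamma>^j) *\<^sub>R d k) - Fcomp f g i (x k) \<le> ereal (\<gamma>^j * \<sigma>) * \<theta> k"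
      using A fin Fcomp_eq th by auto
  qed simp
  then show ?thesis using step by blast
qed

lemma fin_all: "\<forall>i\<in>{1..m}. g i (x k) \<noteq> \<infinity>"
proof (induction k)
  case 0
  then show ?case using x0_dom by simp
next
  case (Suc k)
  obtain j where j: "t k = \<gamma> ^ j" and A: "\<forall>i\<in>{1..m}. Fcomp f g i (x k + (\<gamma> ^ j) *\<^sub>R d k) - Fcomp f g i (x k) \<le> ereal (\<gamma> ^ j * \<sigma>) * \<theta> k"
    using t_form by blast
  show ?case using armijo_real[OF Suc.IH _ A[rule_format]] j update by auto
qed

lemma dec_step: "i \<in> {1..m} \<Longrightarrow> Fr i (x (Suc k)) - Fr i (x k) \<le> t k * \<sigma> * phi (x k) (d k)"
proof -
  assume i: "i \<in> {1..m}"
  obtain j where j: "t k = \<gamma> ^ j" and A: "\<forall>i\<in>{1..m}. Fcomp f g i (x k + (\<gamma> ^ j) *\<^sub>R d k) - Fcomp f g i (x k) \<le> ereal (\<gamma> ^ j * \<sigma>) * \<theta> k"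
    using t_form by blast
  show ?thesis using armijo_real[OF fin_all i A[rule_format, OF i]] j update by auto
qed

lemma phi_d_le0: "phi (x k) (d k) \<le> 0" using dk_facts(3)[OF fin_all] .
lemma gd_fin: "\<forall>i\<in>{1..m}. g i (x k + d k) \<noteq> \<infinity>" using dk_facts(1)[OF fin_all] .
lemma phi_min: "\<forall>i\<in>{1..m}. g i (x k + u) \<noteq> \<infinity> \<Longrightarrow> phi (x k) (d k) \<le> phi (x k) u"
  using dk_facts(4)[OF fin_all] .

lemma Fr_dec: "i \<in> {1..m} \<Longrightarrow> Fr i (x (Suc k)) \<le> Fr i (x k)"
  using dec_step[of i k] phi_d_le0[of k] t_pos[of k] sigma
  by (smt (verit) mult_nonneg_nonpos mult_pos_pos)

lemma phi_ge: "i \<in> {1..m} \<Longrightarrow> tm y i u \<le> phi y u"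
  unfolding phi_def by (rule Max_ge) (use m in \<open>auto simp: Ifin\<close>)

lemma phi_attain: "\<exists>i\<in>{1..m}. phi y u = tm y i u"
proof -
  have "phi y u \<in> (\<lambda>i. tm y i u) ` {1..m}" unfolding phi_def by (rule Max_in) (use m in \<open>auto simp: Ifin\<close>)
  then show ?thesis by auto
qed

lemma quad_mid:
  fixes A :: "real^'n^'n" and u v :: "real^'n"
  shows "(1/2) * (((1/2) *\<^sub>R (u + v)) \<bullet> (A *v ((1/2) *\<^sub>R (u + v))))
     = (1/4) * (u \<bullet> (A *v u)) + (1/4) * (v \<bullet> (A *v v)) - (1/8) * ((u - v) \<bullet> (A *v (u - v)))"
  by (simp add: matrix_vector_mult_scaleR matrix_vector_right_distrib matrix_vector_mult_diff_distrib
      inner_add_left inner_add_right inner_diff_left inner_diff_right algebra_simps)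

lemma strong:
  assumes fv: "\<forall>i\<in>{1..m}. g i (x k + v) \<noteq> \<infinity>"
  shows "phi (x k) (d k) + \<mu>/4 * ((v - d k) \<bullet> (v - d k)) \<le> phi (x k) v"
proof -
  define y where "y = x k"
  define u where "u = d k"
  define w where "w = (1/2) *\<^sub>R (u + v)"
  have fu: "\<forall>i\<in>{1..m}. g i (y + u) \<noteq> \<infinity>" using gd_fin y_def u_def by simp
  have fy: "\<forall>i\<in>{1..m}. g i y \<noteq> \<infinity>" using fin_all y_def by simp
  have gw: "g i (y + w) \<noteq> \<infinity> \<and> gr i (y + w) \<le> (1/2) * gr i (y + u) + (1/2) * gr i (y + v)"
    if i: "i \<in> {1..m}" for i
  proof -
    have pt: "(1 - 1/2) *\<^sub>R (y + u) + (1/2) *\<^sub>R (y + v) = y + w"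
      unfolding w_def by (simp add: vec_eq_iff algebra_simps)
    have "g i ((1 - 1/2) *\<^sub>R (y + u) + (1/2) *\<^sub>R (y + v)) \<le> ereal (1 - 1/2) * g i (y + u) + ereal (1/2) * g i (y + v)"
    proof -
      have cv: "\<forall>a b s. 0 \<le> s \<and> s \<le> 1 \<longrightarrow> g i ((1 - s) *\<^sub>R a + s *\<^sub>R b) \<le> ereal (1 - s) * g i a + ereal s * g i b"
        using g_convex i unfolding ereal_convex_def by blast
      show ?thesis using cv[rule_format, of "1/2" "y+u" "y+v"] by simp
    qed
    then have "g i (y + w) \<le> ereal (1/2) * ereal (gr i (y + u)) + ereal (1/2) * ereal (gr i (y + v))"
      using pt g_eq[OF i] fu fv i y_def by auto
    then have "g i (y + w) \<le> ereal ((1/2) * gr i (y + u) + (1/2) * gr i (y + v))" by simp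
    moreover have "g i (y + w) \<noteq> \<infinity>" using calculation by auto
    ultimately show ?thesis using g_eq[OF i] by (metis ereal_less_eq(3))
  qed
  have fw: "\<forall>i\<in>{1..m}. g i (y + w) \<noteq> \<infinity>" using gw by blast
  have tw: "tm y i w \<le> (1/2) * tm y i u + (1/2) * tm y i v - \<mu>/8 * ((v - u) \<bullet> (v - u))"
    if i: "i \<in> {1..m}" for i
  proof -
    have q: "(1/2) * (w \<bullet> (H i y *v w)) = (1/4) * (u \<bullet> (H i y *v u)) + (1/4) * (v \<bullet> (H i y *v v)) - (1/8) * ((u - v) \<bullet> (H i y *v (u - v)))"
      unfolding w_def by (rule quad_mid)
    have sc: "\<mu> * ((u - v) \<bullet> (u - v)) \<le> (u - v) \<bullet> (H i y *v (u - v))" using strongly_convex i by blast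
    have uv: "(u - v) \<bullet> (u - v) = (v - u) \<bullet> (v - u)" by (simp add: inner_diff_left inner_diff_right inner_commute)
    have lin: "Df i y \<bullet> w = (1/2) * (Df i y \<bullet> u) + (1/2) * (Df i y \<bullet> v)"
      unfolding w_def by (simp add: inner_add_right)
    show ?thesis unfolding tm_def using q sc uv lin gw[OF i] by (simp add: field_simps)
  qed
  have pw: "phi y w \<le> (1/2) * phi y u + (1/2) * phi y v - \<mu>/8 * ((v - u) \<bullet> (v - u))"
  proof -
    obtain i where i: "i \<in> {1..m}" "phi y w = tm y i w" using phi_attain by blast
    then show ?thesis using tw[OF i(1)] phi_ge[OF i(1), of y u] phi_ge[OF i(1), of y v] by linarith
  qed
  have "phi y u \<le> phi y w" using phi_min[OF fw[unfolded y_def]] y_def u_def by simp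
  with pw show ?thesis unfolding y_def u_def by linarith
qed

lemma phi_d_bound: "phi (x k) (d k) \<le> - (\<mu>/4 * (d k \<bullet> d k))"
proof -
  have "\<forall>i\<in>{1..m}. g i (x k + 0) \<noteq> \<infinity>" using fin_all by simp
  from strong[OF this] show ?thesis by (simp add: phi_zero)
qed

lemma Fr_decseq: "i \<in> {1..m} \<Longrightarrow> decseq (\<lambda>k. Fr i (x k))"
  by (rule decseq_SucI) (rule Fr_dec)

lemma lsc_limit:
  assumes i: "i \<in> {1..m}"
  shows "Fcomp f g i xstar \<le> ereal (Fr i (x k))"
proof (rule ccontr)
  define a where "a = Fr i (x k)"
  assume "\<not> Fcomp f g i xstar \<le> ereal (Fr i (x k))"
  then have lt: "ereal a < Fcomp f g i xstar" unfolding a_def by simp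
  obtain c where c: "ereal a < ereal c" "ereal c < Fcomp f g i xstar" using ereal_dense2[OF lt] by blast
  define e where "e = (c - a) / 3"
  have e: "e > 0" using c(1) by (simp add: e_def)
  have gx: "ereal (c - f i xstar - e) < g i xstar"
  proof (cases "g i xstar = \<infinity>")
    case True then show ?thesis by simp
  next
    case False
    then have "g i xstar = ereal (gr i xstar)" using g_eq i by blast
    then show ?thesis using c(2) e by (simp add: Fcomp_def)
  qed
  have ev1: "eventually (\<lambda>y. ereal (c - f i xstar - e) < g i y) (at xstar)"
    using g_lsc i gx unfolding lsc_fun_def by blast
  have "continuous (at xstar) (f i)"
    using f_grad i has_derivative_continuous by blast
  then have "(f i \<longlongrightarrow> f i xstar) (at xstar)" by (simp add: continuous_at)
  then have ev2: "eventually (\<lambda>y. dist (f i y) (f i xstar) < e) (at xstar)"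
    using e by (rule tendstoD)
  have P: "ereal a < Fcomp f g i y"
    if h1: "ereal (c - f i xstar - e) < g i y" and h2: "dist (f i y) (f i xstar) < e" for y
  proof (cases "g i y = \<infinity>")
    case True then show ?thesis by (simp add: Fcomp_def)
  next
    case False
    then have "g i y = ereal (gr i y)" using g_eq i by blast
    then have h3: "c - f i xstar - e < gr i y" "f i y - f i xstar < e \<and> f i xstar - f i y < e" "a < c"
      using h1 h2 c(1) by (auto simp: dist_real_def abs_less_iff)
    have "a < f i y + gr i y" by (rule aux3[OF h3(1) h3(2) h3(3) e_def])
    then show ?thesis using \<open>g i y = ereal (gr i y)\<close> by (simp add: Fcomp_def)
  qed
  have "eventually (\<lambda>y. ereal a < Fcomp f g i y) (at xstar)"
    using eventually_conj[OF ev1 ev2] by (rule eventually_mono) (use P in blast)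
  then obtain \<delta> where \<delta>: "\<delta> > 0" "\<And>y. y \<noteq> xstar \<Longrightarrow> dist y xstar < \<delta> \<Longrightarrow> ereal a < Fcomp f g i y"
    unfolding eventually_at by auto
  have all: "ereal a < Fcomp f g i y" if "dist y xstar < \<delta>" for y
    using \<delta> lt that by (cases "y = xstar") auto
  have "eventually (\<lambda>j. dist (x j) xstar < \<delta>) sequentially"
    using lim \<delta>(1) by (rule tendstoD)
  then obtain N where N: "\<And>j. j \<ge> N \<Longrightarrow> dist (x j) xstar < \<delta>" unfolding eventually_sequentially by blast
  define j where "j = max N k"
  have "ereal a < Fcomp f g i (x j)" using all N j_def by simp
  moreover have "Fcomp f g i (x j) = ereal (Fr i (x j))" using Fcomp_eq i fin_all by blast
  moreover have "Fr i (x j) \<le> a" unfolding a_def using Fr_decseq[OF i, THEN decseqD, of k j] j_def by simp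
  ultimately show False by simp
qed

lemma gstar_fin: "i \<in> {1..m} \<Longrightarrow> g i xstar \<noteq> \<infinity>"
  using lsc_limit[of i 0] by (auto simp: Fcomp_def)

lemma Fr_star: "i \<in> {1..m} \<Longrightarrow> Fr i xstar \<le> Fr i (x k)"
  using lsc_limit[of i k] Fcomp_eq[OF _ gstar_fin] by simp

lemma hess_loc:
  assumes "\<eta> > 0"
  shows "\<exists>r>0. \<forall>i\<in>{1..m}. \<forall>z. dist z xstar < r \<longrightarrow> norm (H i z - H i xstar) < \<eta>"
proof -
  have "\<forall>i\<in>{1..m}. eventually (\<lambda>z. dist (H i z) (H i xstar) < \<eta>) (nhds xstar)"
  proof
    fix i assume i: "i \<in> {1..m}"
    then obtain \<delta> where "\<delta> > 0" "\<forall>z. dist z xstar < \<delta> \<longrightarrow> dist (H i z) (H i xstar) < \<eta>"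
      using hess_cont assms unfolding continuous_on_iff by blast
    then show "eventually (\<lambda>z. dist (H i z) (H i xstar) < \<eta>) (nhds xstar)"
      unfolding eventually_nhds_metric by blast
  qed
  then have "eventually (\<lambda>z. \<forall>i\<in>{1..m}. dist (H i z) (H i xstar) < \<eta>) (nhds xstar)"
    by (rule eventually_ball_finite[OF Ifin])
  then show ?thesis unfolding eventually_nhds_metric by (auto simp: dist_norm)
qed

lemma taylor_loc:
  assumes "\<eta> > 0"
  shows "\<exists>r>0. \<forall>i\<in>{1..m}. \<forall>y w. dist y xstar < r \<longrightarrow> dist (y + w) xstar < r \<longrightarrow>
     \<bar>f i (y + w) - f i y - Df i y \<bullet> w - 1/2 * (w \<bullet> (H i y *v w))\<bar> \<le> \<eta>/2 * (w \<bullet> w)"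
proof -
  define C where "C = real CARD('n)"
  have C: "C > 0" unfolding C_def by simp
  obtain r where r: "r > 0" "\<And>i z. i \<in> {1..m} \<Longrightarrow> dist z xstar < r \<Longrightarrow> norm (H i z - H i xstar) < \<eta> / (2 * C)"
    using hess_loc[of "\<eta> / (2 * C)"] assms C by auto
  show ?thesis
  proof (intro exI[of _ r] conjI allI ballI impI)
    show "r > 0" by fact
    fix i y w assume i: "i \<in> {1..m}" and y: "dist y xstar < r" and yw: "dist (y + w) xstar < r"
    obtain \<xi> where \<xi>: "0 < \<xi>" "\<xi> < 1" and eq: "f i (y + w) = f i y + Df i y \<bullet> w + (1/2) * (w \<bullet> (H i (y + \<xi> *\<^sub>R w) *v w))"
      using taylor2[of "f i" "Df i" "H i" y w] f_grad f_hess i by blast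
    have "(1 - \<xi>) *\<^sub>R y + \<xi> *\<^sub>R (y + w) \<in> ball xstar r"
      using \<xi> y yw by (intro convexD[OF convex_ball]) (auto simp: dist_commute)
    moreover have "(1 - \<xi>) *\<^sub>R y + \<xi> *\<^sub>R (y + w) = y + \<xi> *\<^sub>R w" by (simp add: algebra_simps)
    ultimately have z: "dist (y + \<xi> *\<^sub>R w) xstar < r" by (simp add: dist_commute)
    define A where "A = H i (y + \<xi> *\<^sub>R w) - H i y"
    have "norm A \<le> norm (H i (y + \<xi> *\<^sub>R w) - H i xstar) + norm (H i y - H i xstar)"
      unfolding A_def by (rule order_trans[OF _ norm_triangle_ineq4]) simp
    also have "\<dots> < \<eta> / C" using r(2)[OF i z] r(2)[OF i y] by simp
    finally have nA: "C * norm A \<le> \<eta>" using C by (simp add: field_simps)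
    have "\<bar>w \<bullet> (A *v w)\<bar> \<le> C * norm A * (w \<bullet> w)" unfolding C_def by (rule quad_bound)
    also have "\<dots> \<le> \<eta> * (w \<bullet> w)" using nA by (intro mult_right_mono) auto
    finally have qa: "\<bar>w \<bullet> (A *v w)\<bar> \<le> \<eta> * (w \<bullet> w)" .
    have "f i (y + w) - f i y - Df i y \<bullet> w - 1/2 * (w \<bullet> (H i y *v w)) = 1/2 * (w \<bullet> (A *v w))"
      unfolding eq A_def by (simp add: matrix_vector_mult_diff_rdistrib inner_diff_right)
    then show "\<bar>f i (y + w) - f i y - Df i y \<bullet> w - 1/2 * (w \<bullet> (H i y *v w))\<bar> \<le> \<eta>/2 * (w \<bullet> w)"
      using qa by (simp only: abs_mult)
  qed
qed

lemma gconv_step: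
  assumes i: "i \<in> {1..m}" and s: "0 \<le> s" "s \<le> 1"
  shows "g i (x k + s *\<^sub>R d k) \<noteq> \<infinity> \<and> gr i (x k + s *\<^sub>R d k) \<le> (1 - s) * gr i (x k) + s * gr i (x k + d k)"
proof -
  have cv: "\<forall>a b s. 0 \<le> s \<and> s \<le> 1 \<longrightarrow> g i ((1 - s) *\<^sub>R a + s *\<^sub>R b) \<le> ereal (1 - s) * g i a + ereal s * g i b"
    using g_convex i unfolding ereal_convex_def by blast
  have pt: "(1 - s) *\<^sub>R x k + s *\<^sub>R (x k + d k) = x k + s *\<^sub>R d k" by (simp add: algebra_simps)
  have "g i (x k + s *\<^sub>R d k) \<le> ereal (1 - s) * g i (x k) + ereal s * g i (x k + d k)"
    using cv[rule_format, of s "x k" "x k + d k"] s pt by simp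
  also have "\<dots> = ereal ((1 - s) * gr i (x k) + s * gr i (x k + d k))"
    using g_eq[OF i] fin_all gd_fin i by (metis times_ereal.simps(1) plus_ereal.simps(1))
  finally have le: "g i (x k + s *\<^sub>R d k) \<le> ereal ((1 - s) * gr i (x k) + s * gr i (x k + d k))" .
  then have "g i (x k + s *\<^sub>R d k) \<noteq> \<infinity>" by auto
  with le show ?thesis using g_eq[OF i] by (metis ereal_less_eq(3))
qed

lemma armijo_small:
  obtains r0 where "r0 > 0" "\<And>k s i. dist (x k) xstar < r0/2 \<Longrightarrow> 0 < s \<Longrightarrow> s \<le> 1 \<Longrightarrow> s * norm (d k) < r0/2 \<Longrightarrow>
     i \<in> {1..m} \<Longrightarrow> g i (x k + s *\<^sub>R d k) \<noteq> \<infinity> \<and> Fr i (x k + s *\<^sub>R d k) - Fr i (x k) \<le> s * \<sigma> * phi (x k) (d k)"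
proof -
  define \<eta>0 where "\<eta>0 = (1 - \<sigma>) * \<mu> / 2"
  have \<eta>0: "\<eta>0 > 0" using sigma mu_pos by (simp add: \<eta>0_def)
  obtain r0 where r0: "r0 > 0" and T: "\<And>i y w. i \<in> {1..m} \<Longrightarrow> dist y xstar < r0 \<Longrightarrow> dist (y + w) xstar < r0 \<Longrightarrow>
     \<bar>f i (y + w) - f i y - Df i y \<bullet> w - 1/2 * (w \<bullet> (H i y *v w))\<bar> \<le> \<eta>0/2 * (w \<bullet> w)"
    using taylor_loc[OF \<eta>0] by blast
  show ?thesis
  proof (rule that[OF r0])
    fix k s i assume y: "dist (x k) xstar < r0/2" and s: "0 < s" "s \<le> 1" and sd: "s * norm (d k) < r0/2"
      and i: "i \<in> {1..m}"
    define y where "y = x k"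
    define dd where "dd = d k"
    define w where "w = s *\<^sub>R dd"
    define Q where "Q = dd \<bullet> (H i y *v dd)"
    define D2 where "D2 = dd \<bullet> dd"
    have dyw: "dist (y + w) xstar < r0"
    proof -
      have "dist (y + w) xstar \<le> dist y xstar + norm w" unfolding dist_norm
        by (rule order_trans[OF _ norm_triangle_ineq]) (simp add: algebra_simps)
      also have "norm w = s * norm dd" using s by (simp add: w_def)
      finally show ?thesis using y sd unfolding y_def dd_def by linarith
    qed
    have Tf: "f i (y + w) - f i y \<le> s * (Df i y \<bullet> dd) + 1/2 * (s^2 * Q) + \<eta>0/2 * (s^2 * D2)"
    proof -
      have "\<bar>f i (y + w) - f i y - Df i y \<bullet> w - 1/2 * (w \<bullet> (H i y *v w))\<bar> \<le> \<eta>0/2 * (w \<bullet> w)"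
      proof -
        have "dist y xstar < r0" using y zero_le_dist[of y xstar] unfolding y_def by linarith
        then show ?thesis using T[OF i _ dyw] by simp
      qed
      moreover have "w \<bullet> (H i y *v w) = s^2 * Q" "w \<bullet> w = s^2 * D2" "Df i y \<bullet> w = s * (Df i y \<bullet> dd)"
        unfolding w_def Q_def D2_def by (simp_all add: matrix_vector_mult_scaleR power2_eq_square)
      ultimately have "\<bar>f i (y + w) - f i y - s * (Df i y \<bullet> dd) - 1/2 * (s^2 * Q)\<bar> \<le> \<eta>0/2 * (s^2 * D2)"
        by simp
      then show ?thesis by (simp only: abs_le_iff) linarith
    qed
    have G: "g i (y + w) \<noteq> \<infinity>" "gr i (y + w) \<le> (1 - s) * gr i y + s * gr i (y + dd)"
      using gconv_step[OF i, of s k] s unfolding y_def dd_def w_def by auto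
    have tmp: "Df i y \<bullet> dd + gr i (y + dd) - gr i y + 1/2 * Q \<le> phi y dd"
      using phi_ge[OF i, of y dd] unfolding tm_def Q_def .
    have Qp: "\<mu> * D2 \<le> Q" using strongly_convex i unfolding Q_def D2_def by blast
    have D2p: "0 \<le> D2" unfolding D2_def by simp
    have ph: "phi y dd \<le> - (\<mu>/4 * D2)" using phi_d_bound[of k] unfolding y_def dd_def D2_def .
    have Q0: "0 \<le> Q" using Qp D2p mu_pos by (smt (verit) mult_nonneg_nonneg)
    have a5: "s * (Df i y \<bullet> dd) + s * gr i (y + dd) - s * gr i y + 1/2 * (s * Q) \<le> s * phi y dd"
      using mult_left_mono[OF tmp, of s] s by (simp add: algebra_simps)
    have a1: "1/2 * (s^2 * Q) \<le> 1/2 * (s * Q)" using s Q0 by (simp add: power2_eq_square mult_right_mono)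
    have a2: "\<eta>0/2 * (s^2 * D2) \<le> \<eta>0/2 * (s * D2)"
      using s D2p \<eta>0 by (intro mult_left_mono) (auto simp: power2_eq_square mult_right_mono)
    have a3: "s * phi y dd + \<eta>0/2 * (s * D2) \<le> s * \<sigma> * phi y dd"
    proof -
      have "s * (1 - \<sigma>) * phi y dd \<le> s * (1 - \<sigma>) * (- (\<mu>/4 * D2))"
        using ph s sigma by (intro mult_left_mono) auto
      moreover have "s * (1 - \<sigma>) * (- (\<mu>/4 * D2)) = - (\<eta>0/2 * (s * D2))" unfolding \<eta>0_def by (simp add: algebra_simps)
      moreover have "s * (1 - \<sigma>) * phi y dd = s * phi y dd - s * \<sigma> * phi y dd" by (simp add: algebra_simps)
      ultimately show ?thesis by linarith
    qed
    have a4: "gr i (y + w) \<le> gr i y - s * gr i y + s * gr i (y + dd)" using G(2) by (simp add: algebra_simps)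
    have "Fr i (y + w) - Fr i y \<le> s * \<sigma> * phi y dd"
      unfolding Fr_def using Tf a4 a5 a1 a2 a3 by linarith
    then show "g i (x k + s *\<^sub>R d k) \<noteq> \<infinity> \<and> Fr i (x k + s *\<^sub>R d k) - Fr i (x k) \<le> s * \<sigma> * phi (x k) (d k)"
      using G(1) unfolding y_def dd_def w_def by simp
  qed
qed

lemma pow_choice:
  assumes a: "0 < a" "a \<le> 1"
  shows "\<exists>j. \<gamma> ^ j \<le> a \<and> \<gamma> * a < \<gamma> ^ j"
proof -
  have ex: "\<exists>j. \<gamma> ^ j \<le> a" using real_arch_pow_inv[OF a(1) gamma(2)] by (auto intro: less_imp_le)
  define j where "j = (LEAST j. \<gamma> ^ j \<le> a)"
  have j: "\<gamma> ^ j \<le> a" unfolding j_def using ex by (rule LeastI_ex)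
  show ?thesis
  proof (cases j)
    case 0
    then show ?thesis using j a gamma by (intro exI[of _ j]) (auto intro: mult_less_le_imp_less[of _ 1 _ 1, simplified] simp: mult_le_one)
  next
    case (Suc j')
    then have "\<not> \<gamma> ^ j' \<le> a" using not_less_Least[of j' "\<lambda>j. \<gamma> ^ j \<le> a"] j_def by simp
    then have "\<gamma> * a < \<gamma> * \<gamma> ^ j'" using gamma by simp
    then show ?thesis using j Suc by (intro exI[of _ j]) simp
  qed
qed

lemma step_facts:
  obtains r0 where "r0 > 0"
    "\<And>k. dist (x k) xstar < r0/2 \<Longrightarrow> \<gamma> * min 1 (r0 / (4 * norm (d k))) < t k"
    "\<And>k. dist (x k) xstar < r0/2 \<Longrightarrow> norm (d k) < r0/2 \<Longrightarrow> t k = 1"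
proof -
  obtain r0 where r0: "r0 > 0" and A: "\<And>k s i. dist (x k) xstar < r0/2 \<Longrightarrow> 0 < s \<Longrightarrow> s \<le> 1 \<Longrightarrow> s * norm (d k) < r0/2 \<Longrightarrow>
     i \<in> {1..m} \<Longrightarrow> g i (x k + s *\<^sub>R d k) \<noteq> \<infinity> \<and> Fr i (x k + s *\<^sub>R d k) - Fr i (x k) \<le> s * \<sigma> * phi (x k) (d k)"
    using armijo_small by blast
  show ?thesis
  proof (rule that[OF r0])
    fix k assume dk: "dist (x k) xstar < r0/2"
    define a where "a = min 1 (r0 / (4 * norm (d k)))"
    have nd: "norm (d k) > 0" using not_crit by simp
    have a: "0 < a" "a \<le> 1" using r0 nd by (auto simp: a_def)
    have an: "a * norm (d k) < r0/2"
    proof -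
      have "a * norm (d k) \<le> r0 / (4 * norm (d k)) * norm (d k)" unfolding a_def using nd by (intro mult_right_mono) auto
      also have "\<dots> = r0 / 4" using nd by simp
      finally show ?thesis using r0 by simp
    qed
    obtain j where j: "\<gamma> ^ j \<le> a" "\<gamma> * a < \<gamma> ^ j" using pow_choice[OF a] by blast
    have gj: "0 < \<gamma> ^ j" using gamma by simp
    have "\<gamma> ^ j * norm (d k) < r0/2" using j(1) an nd by (smt (verit) mult_right_mono)
    then have "\<gamma> ^ j \<le> t k" using A[OF dk gj _ _] j(1) a(2) by (intro armijo_back[OF fin_all]) auto
    then show "\<gamma> * min 1 (r0 / (4 * norm (d k))) < t k" using j(2) unfolding a_def by simp
  next
    fix k assume dk: "dist (x k) xstar < r0/2" and nd: "norm (d k) < r0/2"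
    have "\<gamma> ^ 0 \<le> t k" using A[OF dk, of 1] nd by (intro armijo_back[OF fin_all]) auto
    then show "t k = 1" using t_le1[of k] by simp
  qed
qed

lemma one_in: "1 \<in> {1..m}" using m by simp

lemma td_to_0: "(\<lambda>k. t k * (norm (d k))^2) \<longlonglongrightarrow> 0"
proof -
  define X where "X k = Fr 1 (x k)" for k
  have "decseq X" unfolding X_def by (rule Fr_decseq[OF one_in])
  moreover have "\<forall>k. Fr 1 xstar \<le> X k" unfolding X_def using Fr_star[OF one_in] by blast
  ultimately obtain L where L: "X \<longlonglongrightarrow> L" by (rule decseq_convergent)
  have "(\<lambda>k. X k - X (Suc k)) \<longlonglongrightarrow> L - L" by (rule tendsto_diff[OF L LIMSEQ_Suc[OF L]])
  then have "(\<lambda>k. X k - X (Suc k)) \<longlonglongrightarrow> 0" by simp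
  from tendsto_mult_right_zero[OF this, of "4 / (\<sigma> * \<mu>)"]
  have "(\<lambda>k. 4 / (\<sigma> * \<mu>) * (X k - X (Suc k))) \<longlonglongrightarrow> 0" .
  note up = this
  have le: "t k * (norm (d k))^2 \<le> 4 / (\<sigma> * \<mu>) * (X k - X (Suc k))" for k
  proof -
    have "X (Suc k) - X k \<le> t k * \<sigma> * phi (x k) (d k)" unfolding X_def by (rule dec_step[OF one_in])
    also have "\<dots> \<le> t k * \<sigma> * (- (\<mu>/4 * (d k \<bullet> d k)))"
      using phi_d_bound[of k] t_pos[of k] sigma by (intro mult_left_mono) auto
    finally have "t k * \<sigma> * (\<mu>/4 * (norm (d k))^2) \<le> X k - X (Suc k)" by (simp add: power2_norm_eq_inner)
    then have "(\<sigma> * \<mu> / 4) * (t k * (norm (d k))^2) \<le> X k - X (Suc k)" by (simp add: algebra_simps)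
    then show ?thesis using sigma mu_pos by (simp add: field_simps)
  qed
  have ge: "0 \<le> t k * (norm (d k))^2" for k using t_pos[of k] by simp
  show ?thesis
    by (rule tendsto_sandwich[OF always_eventually always_eventually tendsto_const up]) (use le ge in auto)
qed

lemma d_to_0: "d \<longlonglongrightarrow> 0"
proof -
  obtain r0 where r0: "r0 > 0" and T: "\<And>k. dist (x k) xstar < r0/2 \<Longrightarrow> \<gamma> * min 1 (r0 / (4 * norm (d k))) < t k"
    using step_facts by blast
  show ?thesis unfolding LIMSEQ_iff
  proof (intro allI impI)
    fix \<epsilon> :: real assume e: "\<epsilon> > 0"
    define c where "c = \<gamma> * min (\<epsilon>^2) (r0 * \<epsilon> / 4)"
    have c: "c > 0" using gamma e r0 by (simp add: c_def)
    have ev1: "eventually (\<lambda>k. dist (x k) xstar < r0/2) sequentially" using lim r0 by (intro tendstoD) auto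
    have "eventually (\<lambda>k. dist (t k * (norm (d k))^2) 0 < c) sequentially" using td_to_0 c by (rule tendstoD)
    then have ev2: "eventually (\<lambda>k. t k * (norm (d k))^2 < c) sequentially"
      by (rule eventually_mono) (use t_pos in \<open>auto simp: dist_real_def\<close>)
    have "eventually (\<lambda>k. norm (d k) < \<epsilon>) sequentially"
      using eventually_conj[OF ev1 ev2]
    proof (rule eventually_mono)
      fix k assume h: "dist (x k) xstar < r0/2 \<and> t k * (norm (d k))^2 < c"
      show "norm (d k) < \<epsilon>"
      proof (rule ccontr)
        assume "\<not> norm (d k) < \<epsilon>"
        then have nd: "norm (d k) \<ge> \<epsilon>" by simp
        then have ndp: "norm (d k) > 0" using e by linarith
        have tl: "\<gamma> * min 1 (r0 / (4 * norm (d k))) < t k" using T h by blast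
        define n where "n = norm (d k)"
        have np: "n > 0" "\<epsilon> \<le> n" using ndp nd by (auto simp: n_def)
        have "c \<le> \<gamma> * (min 1 (r0 / (4 * n)) * n^2)"
        proof (cases "1 \<le> r0 / (4 * n)")
          case True
          then have eq: "min 1 (r0 / (4 * n)) * n^2 = n^2" by simp
          have "min (\<epsilon>^2) (r0 * \<epsilon> / 4) \<le> n^2"
            using np e by (smt (verit) min.cobounded1 power_mono)
          then show ?thesis unfolding c_def eq using gamma by (intro mult_left_mono) auto
        next
          case False
          then have "min 1 (r0 / (4 * n)) = r0 / (4 * n)" by simp
          moreover have "r0 / (4 * n) * n^2 = r0 * n / 4" using np by (simp add: power2_eq_square)
          ultimately have eq: "min 1 (r0 / (4 * n)) * n^2 = r0 * n / 4" by simp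
          have "r0 * \<epsilon> / 4 \<le> r0 * n / 4" using np r0 by simp
          then have "min (\<epsilon>^2) (r0 * \<epsilon> / 4) \<le> r0 * n / 4" by linarith
          then show ?thesis unfolding c_def eq using gamma by (intro mult_left_mono) auto
        qed
        then have "c \<le> \<gamma> * min 1 (r0 / (4 * norm (d k))) * (norm (d k))^2" by (simp add: n_def mult.assoc)
        also have "\<dots> \<le> t k * (norm (d k))^2" using tl by (intro mult_right_mono) auto
        finally show False using h by simp
      qed
    qed
    then show "\<exists>no. \<forall>n\<ge>no. norm (d n - 0) < \<epsilon>" unfolding eventually_sequentially by auto
  qed
qed

end
context pnm begin

lemma main_ineq:
  assumes eta: "0 < \<eta>"
  obtains K where "\<And>k. k \<ge> K \<Longrightarrow> t k = 1 \<and> (\<mu>/4 - \<eta>) * (norm (x (Suc k) - xstar))^2 \<le> (3*\<eta>/2) * (norm (x k - xstar))^2"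
proof -
  obtain r where r: "r > 0" and T: "\<And>i y w. i \<in> {1..m} \<Longrightarrow> dist y xstar < r \<Longrightarrow> dist (y + w) xstar < r \<Longrightarrow>
     \<bar>f i (y + w) - f i y - Df i y \<bullet> w - 1/2 * (w \<bullet> (H i y *v w))\<bar> \<le> \<eta>/2 * (w \<bullet> w)"
    using taylor_loc[OF eta] by blast
  obtain r0 where r0: "r0 > 0" and T1: "\<And>k. dist (x k) xstar < r0/2 \<Longrightarrow> norm (d k) < r0/2 \<Longrightarrow> t k = 1"
    using step_facts by blast
  define q where "q = min (r/2) (r0/2)"
  have q: "q > 0" using r r0 by (simp add: q_def)
  have ev1: "eventually (\<lambda>k. dist (x k) xstar < q) sequentially" using lim q by (rule tendstoD)
  have ev2: "eventually (\<lambda>k. dist (d k) 0 < q) sequentially" using d_to_0 q by (rule tendstoD)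
  obtain K where K: "\<And>k. k \<ge> K \<Longrightarrow> dist (x k) xstar < q \<and> dist (d k) 0 < q"
    using eventually_conj[OF ev1 ev2] unfolding eventually_sequentially by blast
  show ?thesis
  proof (rule that)
    fix k assume k: "k \<ge> K"
    define y where "y = x k"
    define dd where "dd = d k"
    define v where "v = xstar - y"
    have hy: "dist y xstar < q" and hd: "norm dd < q" using K[OF k] by (auto simp: y_def dd_def)
    have t1: "t k = 1" using T1 hy hd unfolding q_def y_def dd_def by auto
    have xs: "x (Suc k) = y + dd" using update t1 by (simp add: y_def dd_def)
    have "q \<le> r/2" by (simp add: q_def)
    then have yr: "dist y xstar < r" using hy zero_le_dist[of y xstar] by linarith
    have ydr: "dist (y + dd) xstar < r"
    proof -
      have "dist (y + dd) xstar \<le> dist y xstar + norm dd" unfolding dist_norm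
        by (rule order_trans[OF _ norm_triangle_ineq]) (simp add: algebra_simps)
      then show ?thesis using hy hd unfolding q_def by linarith
    qed
    have yv: "y + v = xstar" by (simp add: v_def)
    have fv: "\<forall>i\<in>{1..m}. g i (x k + v) \<noteq> \<infinity>" using gstar_fin yv y_def by simp
    have st: "phi y dd + \<mu>/4 * ((v - dd) \<bullet> (v - dd)) \<le> phi y v"
      using strong[OF fv] unfolding y_def dd_def .
    obtain i where i: "i \<in> {1..m}" "phi y v = tm y i v" using phi_attain by blast
    have Tv: "Df i y \<bullet> v + 1/2 * (v \<bullet> (H i y *v v)) \<le> f i xstar - f i y + \<eta>/2 * (v \<bullet> v)"
    proof -
      have "dist (y + v) xstar < r" using yv r by simp
      from T[OF i(1) yr this] show ?thesis unfolding yv by (simp only: abs_le_iff) linarith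
    qed
    have Td: "f i (y + dd) - f i y \<le> Df i y \<bullet> dd + 1/2 * (dd \<bullet> (H i y *v dd)) + \<eta>/2 * (dd \<bullet> dd)"
      using T[OF i(1) yr ydr] by (simp only: abs_le_iff) linarith
    have F1: "Fr i xstar \<le> Fr i (y + dd)" using Fr_star[OF i(1), of "Suc k"] xs by simp
    have tmd: "tm y i dd \<le> phi y dd" by (rule phi_ge[OF i(1)])
    have key: "\<mu>/4 * ((v - dd) \<bullet> (v - dd)) \<le> \<eta>/2 * (v \<bullet> v) + \<eta>/2 * (dd \<bullet> dd)"
      using st i(2) Tv Td F1 tmd unfolding tm_def Fr_def yv by linarith
    define E where "E = (norm (v - dd))^2"
    define V where "V = (norm v)^2"
    have dd2: "dd \<bullet> dd \<le> 2 * V + 2 * E"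
    proof -
      have "norm dd \<le> norm v + norm (v - dd)" using norm_triangle_ineq4[of v "v - dd"] by simp
      then have "(norm dd)^2 \<le> (norm v + norm (v - dd))^2" by (intro power_mono) auto
      also have "\<dots> \<le> 2 * (norm v)^2 + 2 * (norm (v - dd))^2"
        by (smt (verit) sum_squares_bound power2_sum)
      finally show ?thesis by (simp add: power2_norm_eq_inner E_def V_def)
    qed
    have key2: "\<mu>/4 * E \<le> \<eta>/2 * V + \<eta>/2 * (dd \<bullet> dd)"
      using key by (simp add: power2_norm_eq_inner E_def V_def)
    have "\<eta>/2 * (dd \<bullet> dd) \<le> \<eta>/2 * (2 * V + 2 * E)" using dd2 eta by (intro mult_left_mono) auto
    with key2 have "(\<mu>/4 - \<eta>) * E \<le> (3*\<eta>/2) * V" by (simp add: algebra_simps)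
    moreover have "norm (x (Suc k) - xstar) = norm (v - dd)"
      unfolding xs v_def by (metis minus_diff_eq norm_minus_cancel add_diff_cancel_left' diff_diff_eq2 add.commute)
    moreover have "norm (x k - xstar) = norm v" unfolding v_def y_def by (simp add: norm_minus_commute)
    ultimately show "t k = 1 \<and> (\<mu>/4 - \<eta>) * (norm (x (Suc k) - xstar))^2 \<le> (3*\<eta>/2) * (norm (x k - xstar))^2"
      using t1 by (simp add: E_def V_def)
  qed
qed

lemma eventually_neq: "eventually (\<lambda>k. x k \<noteq> xstar) sequentially"
proof -
  have eta: "0 < \<mu>/8" using mu_pos by simp
  obtain K where K: "\<And>k. k \<ge> K \<Longrightarrow> t k = 1 \<and> (\<mu>/4 - \<mu>/8) * (norm (x (Suc k) - xstar))^2 \<le> (3*(\<mu>/8)/2) * (norm (x k - xstar))^2"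
    using main_ineq[OF eta] by blast
  have "x k \<noteq> xstar" if k: "k \<ge> K" for k
  proof
    assume xk: "x k = xstar"
    with K[OF k] have "(\<mu>/4 - \<mu>/8) * (norm (x (Suc k) - xstar))^2 \<le> 0" by simp
    moreover have "\<mu>/4 - \<mu>/8 > 0" using mu_pos by simp
    ultimately have "(norm (x (Suc k) - xstar))^2 \<le> 0" by (simp add: mult_le_0_iff)
    then have "x (Suc k) = xstar" by simp
    moreover have "x (Suc k) = x k + d k" using update K[OF k] by simp
    ultimately have "d k = 0" using xk by simp
    then show False using not_crit by simp
  qed
  then show ?thesis unfolding eventually_sequentially by blast
qed

lemma ratio_to_0: "(\<lambda>k. norm (x (Suc k) - xstar) / norm (x k - xstar)) \<longlonglongrightarrow> 0"
  unfolding LIMSEQ_iff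
proof (intro allI impI)
  fix \<epsilon> :: real assume e: "\<epsilon> > 0"
  define \<eta> where "\<eta> = min (\<mu>/8) (\<epsilon>^2 * \<mu> / 48)"
  have eta: "0 < \<eta>" using e mu_pos by (simp add: \<eta>_def)
  obtain K1 where K1: "\<And>k. k \<ge> K1 \<Longrightarrow> t k = 1 \<and> (\<mu>/4 - \<eta>) * (norm (x (Suc k) - xstar))^2 \<le> (3*\<eta>/2) * (norm (x k - xstar))^2"
    using main_ineq[OF eta] by blast
  obtain K2 where K2: "\<And>k. k \<ge> K2 \<Longrightarrow> x k \<noteq> xstar" using eventually_neq unfolding eventually_sequentially by blast
  have "norm (norm (x (Suc k) - xstar) / norm (x k - xstar) - 0) < \<epsilon>" if k: "k \<ge> max K1 K2" for k
  proof -
    define e0 where "e0 = norm (x k - xstar)"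
    define e1 where "e1 = norm (x (Suc k) - xstar)"
    have e0p: "e0 > 0" using K2[of k] k by (simp add: e0_def)
    have e1p: "e1 \<ge> 0" by (simp add: e1_def)
    have ineq: "(\<mu>/4 - \<eta>) * e1^2 \<le> (3*\<eta>/2) * e0^2" using K1[of k] k by (simp add: e0_def e1_def)
    have "\<mu>/8 * e1^2 \<le> (\<mu>/4 - \<eta>) * e1^2" using eta by (intro mult_right_mono) (auto simp: \<eta>_def)
    also have "\<dots> \<le> (3*\<eta>/2) * e0^2" by (rule ineq)
    also have "\<dots> \<le> (3*(\<epsilon>^2 * \<mu> / 48)/2) * e0^2"
    proof -
      have "\<eta> \<le> \<epsilon>^2 * \<mu> / 48" unfolding \<eta>_def by (rule min.cobounded2)
      then show ?thesis by (intro mult_right_mono) (auto simp: mult.commute)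
    qed
    finally have "\<mu>/8 * e1^2 \<le> \<mu>/8 * ((\<epsilon>/2)^2 * e0^2)" by (simp add: power_divide field_simps)
    then have "e1^2 \<le> (\<epsilon>/2)^2 * e0^2" using mu_pos by simp
    then have "e1^2 \<le> (\<epsilon>/2 * e0)^2" by (simp only: power_mult_distrib)
    then have "e1 \<le> \<epsilon>/2 * e0" by (rule power2_le_imp_le) (use e e0p in simp)
    then have "e1 / e0 \<le> \<epsilon>/2" using e0p by (simp add: divide_le_eq)
    then have "e1 / e0 < \<epsilon>" using e by linarith
    then show ?thesis using e e1p e0p unfolding e0_def[symmetric] e1_def[symmetric] by (simp add: abs_of_nonneg)
  qed
  then show "\<exists>no. \<forall>n\<ge>no. norm (norm (x (Suc n) - xstar) / norm (x n - xstar) - 0) < \<epsilon>" by blast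
qed

lemma part1:
  assumes e: "0 < \<epsilon>" "\<epsilon> \<le> (1 - \<sigma>) * \<mu>"
  shows "\<exists>K::nat. K > 0 \<and> (\<forall>k\<ge>K.
               (let \<tau> = norm (x (Suc k) - x k) / norm (x k - xstar) in
                  norm (x (Suc k) - xstar) \<le> sqrt (\<epsilon> * (1 + \<tau>\<^sup>2) / \<mu>) * norm (x k - xstar)
                  \<and> (\<mu> - sqrt (2 * \<mu> * \<epsilon> - \<epsilon>\<^sup>2)) / (\<mu> - \<epsilon>) \<le> \<tau>
                  \<and> \<tau> \<le> (\<mu> + sqrt (2 * \<mu> * \<epsilon> - \<epsilon>\<^sup>2)) / (\<mu> - \<epsilon>)))"
proof -
  have em: "\<epsilon> < \<mu>"
  proof -
    have "(1 - \<sigma>) * \<mu> < 1 * \<mu>" using sigma mu_pos by (intro mult_strict_right_mono) auto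
    then show ?thesis using e by simp
  qed
  define s where "s = sqrt (2 * \<mu> * \<epsilon> - \<epsilon>\<^sup>2)"
  have "\<epsilon>\<^sup>2 < 2 * \<mu> * \<epsilon> - \<epsilon>\<^sup>2"
  proof -
    have "\<epsilon> * \<epsilon> < \<mu> * \<epsilon>" using em e by (intro mult_strict_right_mono) auto
    then show ?thesis by (simp add: power2_eq_square)
  qed
  then have se: "\<epsilon> < s" unfolding s_def by (rule real_less_rsqrt)
  define q0 where "q0 = min ((s - \<epsilon>) / (\<mu> - \<epsilon>)) (sqrt (\<epsilon> / \<mu>))"
  have q0: "q0 > 0" using se em e mu_pos by (simp add: q0_def)
  have "eventually (\<lambda>k. dist (norm (x (Suc k) - xstar) / norm (x k - xstar)) 0 < q0) sequentially"
    using ratio_to_0 q0 by (rule tendstoD)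
  then obtain N where N: "\<And>k. k \<ge> N \<Longrightarrow> dist (norm (x (Suc k) - xstar) / norm (x k - xstar)) 0 < q0 \<and> x k \<noteq> xstar"
    using eventually_neq unfolding eventually_sequentially
    by (metis (no_types, lifting) max.bounded_iff nle_le)
  show ?thesis
  proof (intro exI[of _ "max N 1"] conjI allI impI)
    show "max N 1 > 0" by simp
    fix k assume k: "k \<ge> max N 1"
    define e0 where "e0 = norm (x k - xstar)"
    define e1 where "e1 = norm (x (Suc k) - xstar)"
    define \<rho> where "\<rho> = e1 / e0"
    define \<tau> where "\<tau> = norm (x (Suc k) - x k) / e0"
    have Nk: "dist \<rho> 0 < q0" "x k \<noteq> xstar" using N[of k] k by (auto simp: \<rho>_def e0_def e1_def)
    have e0p: "e0 > 0" using Nk(2) by (simp add: e0_def)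
    have e1p: "e1 \<ge> 0" by (simp add: e1_def)
    have \<rho>0: "\<rho> \<ge> 0" using e0p e1p by (simp add: \<rho>_def)
    have \<rho>q: "\<rho> < q0" using Nk(1) \<rho>0 by (simp add: dist_real_def)
    have e1eq: "e1 = \<rho> * e0" using e0p by (simp add: \<rho>_def)
    define a where "a = x (Suc k) - xstar"
    define b where "b = x k - xstar"
    have ab: "x (Suc k) - x k = a - b" by (simp add: a_def b_def)
    have up: "norm (x (Suc k) - x k) \<le> e1 + e0" unfolding ab e0_def e1_def a_def[symmetric] b_def[symmetric]
      by (rule norm_triangle_ineq4)
    have lo: "e0 \<le> norm (x (Suc k) - x k) + e1"
    proof -
      have "norm b = norm ((b - a) + a)" by simp
      also have "\<dots> \<le> norm (b - a) + norm a" by (rule norm_triangle_ineq)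
      finally show ?thesis unfolding ab e0_def e1_def a_def[symmetric] b_def[symmetric] by (simp add: norm_minus_commute)
    qed
    have tup: "\<tau> \<le> 1 + \<rho>"
    proof -
      have "\<tau> \<le> (e1 + e0) / e0" unfolding \<tau>_def using up e0p by (simp add: divide_right_mono)
      also have "\<dots> = 1 + \<rho>" using e0p by (simp add: \<rho>_def field_simps)
      finally show ?thesis .
    qed
    have tlo: "1 - \<rho> \<le> \<tau>"
    proof -
      have "(e0 - e1) / e0 \<le> \<tau>" unfolding \<tau>_def using lo e0p by (simp add: divide_right_mono)
      moreover have "(e0 - e1) / e0 = 1 - \<rho>" using e0p by (simp add: \<rho>_def field_simps)
      ultimately show ?thesis by simp
    qed
    have \<rho>1: "\<rho> < (s - \<epsilon>) / (\<mu> - \<epsilon>)" using \<rho>q unfolding q0_def by simp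
    have \<rho>2: "\<rho> < sqrt (\<epsilon> / \<mu>)" using \<rho>q unfolding q0_def by simp
    have lb: "(\<mu> - s) / (\<mu> - \<epsilon>) = 1 - (s - \<epsilon>) / (\<mu> - \<epsilon>)" using em by (simp add: field_simps)
    have ub: "(\<mu> + s) / (\<mu> - \<epsilon>) = 1 + (s + \<epsilon>) / (\<mu> - \<epsilon>)" using em by (simp add: field_simps)
    have "(s - \<epsilon>) / (\<mu> - \<epsilon>) \<le> (s + \<epsilon>) / (\<mu> - \<epsilon>)" using em e by (intro divide_right_mono) auto
    then have C2: "(\<mu> - s) / (\<mu> - \<epsilon>) \<le> \<tau>" and C3: "\<tau> \<le> (\<mu> + s) / (\<mu> - \<epsilon>)"
      using lb ub tlo tup \<rho>1 by linarith+
    have "sqrt (\<epsilon> / \<mu>) \<le> sqrt (\<epsilon> * (1 + \<tau>\<^sup>2) / \<mu>)"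
    proof (rule real_sqrt_le_mono)
      have "\<epsilon> \<le> \<epsilon> * (1 + \<tau>\<^sup>2)" using e by simp
      then show "\<epsilon> / \<mu> \<le> \<epsilon> * (1 + \<tau>\<^sup>2) / \<mu>" using mu_pos by (intro divide_right_mono) auto
    qed
    then have "\<rho> \<le> sqrt (\<epsilon> * (1 + \<tau>\<^sup>2) / \<mu>)" using \<rho>2 by linarith
    then have C1: "e1 \<le> sqrt (\<epsilon> * (1 + \<tau>\<^sup>2) / \<mu>) * e0" unfolding e1eq using e0p by (intro mult_right_mono) auto
    show "let \<tau> = norm (x (Suc k) - x k) / norm (x k - xstar) in
                  norm (x (Suc k) - xstar) \<le> sqrt (\<epsilon> * (1 + \<tau>\<^sup>2) / \<mu>) * norm (x k - xstar)
                  \<and> (\<mu> - sqrt (2 * \<mu> * \<epsilon> - \<epsilon>\<^sup>2)) / (\<mu> - \<epsilon>) \<le> \<tau>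
                  \<and> \<tau> \<le> (\<mu> + sqrt (2 * \<mu> * \<epsilon> - \<epsilon>\<^sup>2)) / (\<mu> - \<epsilon>)"
      unfolding Let_def using C1 C2 C3 by (simp add: \<tau>_def e0_def e1_def s_def)
  qed
qed

end

theorem theorem4:
  fixes m :: nat
    and f :: "nat \<Rightarrow> real^'n \<Rightarrow> real"
    and Df :: "nat \<Rightarrow> real^'n \<Rightarrow> real^'n"
    and H :: "nat \<Rightarrow> real^'n \<Rightarrow> real^'n^'n"
    and g :: "nat \<Rightarrow> real^'n \<Rightarrow> ereal"
    and \<mu> \<sigma> \<gamma> :: real
    and x d :: "nat \<Rightarrow> real^'n"
    and \<theta> :: "nat \<Rightarrow> ereal"
    and t :: "nat \<Rightarrow> real"
    and xstar :: "real^'n"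
  assumes m: "m \<ge> 1"
    and g_proper: "\<forall>i\<in>{1..m}. proper_fun (g i)"
    and g_convex: "\<forall>i\<in>{1..m}. ereal_convex (g i)"
    and g_lsc: "\<forall>i\<in>{1..m}. lsc_fun (g i)"
    and f_grad: "\<forall>i\<in>{1..m}. \<forall>y. (f i has_derivative (\<lambda>v. Df i y \<bullet> v)) (at y)"
    and f_hess: "\<forall>i\<in>{1..m}. \<forall>y. (Df i has_derivative (\<lambda>v. H i y *v v)) (at y)"
    and hess_cont: "\<forall>i\<in>{1..m}. continuous_on UNIV (H i)"
    and mu_pos: "\<mu> > 0"
    and strongly_convex: "\<forall>i\<in>{1..m}. \<forall>y v. \<mu> * (v \<bullet> v) \<le> v \<bullet> (H i y *v v)"
    and sigma: "0 < \<sigma>" "\<sigma> < 1"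
    and gamma: "0 < \<gamma>" "\<gamma> < 1"
    and x0_dom: "\<forall>i\<in>{1..m}. g i (x 0) \<noteq> \<infinity>"
    and dir: "\<forall>k. \<forall>v. newton_subobj m Df H g (x k) (d k) \<le> newton_subobj m Df H g (x k) v"
    and val: "\<forall>k. \<theta> k = newton_subobj m Df H g (x k) (d k)"
    and step: "\<forall>k. t k \<in> armijo_steps m f g \<sigma> \<gamma> (x k) (d k) (\<theta> k)
                    \<and> (\<forall>s\<in>armijo_steps m f g \<sigma> \<gamma> (x k) (d k) (\<theta> k). s \<le> t k)"
    and update: "\<forall>k. x (Suc k) = x k + t k *\<^sub>R d k"
    and not_crit: "\<forall>k. d k \<noteq> 0"
    and lim: "x \<longlonglongrightarrow> xstar"
  shows "(\<forall>\<epsilon>. 0 < \<epsilon> \<and> \<epsilon> \<le> (1 - \<sigma>) * \<mu> \<longrightarrow>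
            (\<exists>K::nat. K > 0 \<and> (\<forall>k\<ge>K.
               (let \<tau> = norm (x (Suc k) - x k) / norm (x k - xstar) in
                  norm (x (Suc k) - xstar) \<le> sqrt (\<epsilon> * (1 + \<tau>\<^sup>2) / \<mu>) * norm (x k - xstar)
                  \<and> (\<mu> - sqrt (2 * \<mu> * \<epsilon> - \<epsilon>\<^sup>2)) / (\<mu> - \<epsilon>) \<le> \<tau>
                  \<and> \<tau> \<le> (\<mu> + sqrt (2 * \<mu> * \<epsilon> - \<epsilon>\<^sup>2)) / (\<mu> - \<epsilon>)))))
         \<and> ((\<lambda>k. norm (x (Suc k) - xstar) / norm (x k - xstar)) \<longlonglongrightarrow> 0)"
proof -
  interpret P: pnm m f Df H g \<mu> \<sigma> \<gamma> x d \<theta> t xstar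
    by (rule pnm.intro) (rule assms)+
  show ?thesis using P.part1 P.ratio_to_0 by blast
qed

end
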